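(* Let $T$ be a tree with $ex(T)\ge1$, and let $g:V(T)\rightarrow[0,1]$ be any minimum resolving function of $T$. Then, for each $v\in M_2(T)$ with $ter(v)=\alpha\ge2$, $g(V(T_v)-\{v\})=\frac{\alpha}{2}$, and $\sum_{v\in M_2(T)}(g(V(T_v))-g(v))=\dim_f(T)$.
   Context: $d(x,y)$ is the distance in the tree. For a function $g$ on $V(T)$ and $U\subseteq V(T)$, $g(U)=\sum_{s\in U}g(s)$. $R\{x,y\}=\{z: d(x,z)\ne d(y,z)\}$; $g:V(T)\to[0,1]$ is a resolving function if $g(R\{x,y\})\ge1$ for all distinct $x,y$; $\dim_f(T)$ is the minimum of $g(V(T))$ over resolving functions, and a minimum resolving function is one attaining it. A leaf is a vertex of degree one; a major vertex has degree at least three. A leaf $\ell$ is a terminal vertex of a major vertex $v$ if $d(\ell,v)<d(\ell,w)$ for every other major vertex $w$. $ter(v)$ is the number of terminal vertices of $v$; an exterior major vertex is a major vertex with $ter(v)>0$. $M(T)$ is the set of exterior major vertices, $ex(T)=|M(T)|$, $M_1(T)=\{w\in M(T): ter(w)=1\}$, $M_2(T)=\{w\in M(T): ter(w)\ge2\}$. For $v\in M(T)$, $T_v$ is the subtree induced by $v$ and all vertices on the paths joining $v$ to its terminal vertices. *)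

theory Defs
  imports Main "HOL-Library.Extended_Real" Complex_Main
begin

definition graph :: "'a set \<Rightarrow> ('a \<Rightarrow> 'a \<Rightarrow> bool) \<Rightarrow> bool" where
  "graph V E \<longleftrightarrow> finite V \<and> (\<forall>x y. E x y \<longrightarrow> x \<in> V \<and> y \<in> V)
     \<and> (\<forall>x y. E x y \<longrightarrow> E y x) \<and> (\<forall>x. \<not> E x x)"

fun walk :: "('a \<Rightarrow> 'a \<Rightarrow> bool) \<Rightarrow> 'a list \<Rightarrow> bool" where
  "walk E [] = False"
| "walk E [x] = True"
| "walk E (x # y # xs) = (E x y \<and> walk E (y # xs))"

definition path :: "('a \<Rightarrow> 'a \<Rightarrow> bool) \<Rightarrow> 'a list \<Rightarrow> 'a \<Rightarrow> 'a \<Rightarrow> bool" where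
  "path E xs x y \<longleftrightarrow> walk E xs \<and> distinct xs \<and> hd xs = x \<and> last xs = y"

definition connected_graph :: "'a set \<Rightarrow> ('a \<Rightarrow> 'a \<Rightarrow> bool) \<Rightarrow> bool" where
  "connected_graph V E \<longleftrightarrow> (\<forall>x\<in>V. \<forall>y\<in>V. \<exists>xs. path E xs x y)"

definition has_cycle :: "('a \<Rightarrow> 'a \<Rightarrow> bool) \<Rightarrow> bool" where
  "has_cycle E \<longleftrightarrow> (\<exists>xs. walk E xs \<and> distinct xs \<and> length xs \<ge> 3 \<and> E (last xs) (hd xs))"

definition tree :: "'a set \<Rightarrow> ('a \<Rightarrow> 'a \<Rightarrow> bool) \<Rightarrow> bool" where
  "tree V E \<longleftrightarrow> graph V E \<and> V \<noteq> {} \<and> connected_graph V E \<and> \<not> has_cycle E"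

definition dist :: "('a \<Rightarrow> 'a \<Rightarrow> bool) \<Rightarrow> 'a \<Rightarrow> 'a \<Rightarrow> nat" where
  "dist E x y = (LEAST n. \<exists>xs. walk E xs \<and> hd xs = x \<and> last xs = y \<and> length xs = Suc n)"

definition degree :: "'a set \<Rightarrow> ('a \<Rightarrow> 'a \<Rightarrow> bool) \<Rightarrow> 'a \<Rightarrow> nat" where
  "degree V E v = card {w \<in> V. E v w}"

definition leaf :: "'a set \<Rightarrow> ('a \<Rightarrow> 'a \<Rightarrow> bool) \<Rightarrow> 'a \<Rightarrow> bool" where
  "leaf V E v \<longleftrightarrow> v \<in> V \<and> degree V E v = 1"

definition major :: "'a set \<Rightarrow> ('a \<Rightarrow> 'a \<Rightarrow> bool) \<Rightarrow> 'a \<Rightarrow> bool" where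
  "major V E v \<longleftrightarrow> v \<in> V \<and> degree V E v \<ge> 3"

definition terminals :: "'a set \<Rightarrow> ('a \<Rightarrow> 'a \<Rightarrow> bool) \<Rightarrow> 'a \<Rightarrow> 'a set" where
  "terminals V E v = {l. leaf V E l \<and>
      (\<forall>w. major V E w \<and> w \<noteq> v \<longrightarrow> dist E l v < dist E l w)}"

definition ter :: "'a set \<Rightarrow> ('a \<Rightarrow> 'a \<Rightarrow> bool) \<Rightarrow> 'a \<Rightarrow> nat" where
  "ter V E v = card (terminals V E v)"

definition ext_major :: "'a set \<Rightarrow> ('a \<Rightarrow> 'a \<Rightarrow> bool) \<Rightarrow> 'a set" where
  "ext_major V E = {v. major V E v \<and> ter V E v > 0}"

definition ex :: "'a set \<Rightarrow> ('a \<Rightarrow> 'a \<Rightarrow> bool) \<Rightarrow> nat" where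
  "ex V E = card (ext_major V E)"

definition M1 :: "'a set \<Rightarrow> ('a \<Rightarrow> 'a \<Rightarrow> bool) \<Rightarrow> 'a set" where
  "M1 V E = {w \<in> ext_major V E. ter V E w = 1}"

definition M2 :: "'a set \<Rightarrow> ('a \<Rightarrow> 'a \<Rightarrow> bool) \<Rightarrow> 'a set" where
  "M2 V E = {w \<in> ext_major V E. ter V E w \<ge> 2}"

definition Tv :: "'a set \<Rightarrow> ('a \<Rightarrow> 'a \<Rightarrow> bool) \<Rightarrow> 'a \<Rightarrow> 'a set" where
  "Tv V E v = {v} \<union> {z. \<exists>l\<in>terminals V E v. \<exists>xs. path E xs v l \<and> z \<in> set xs}"

definition Rset :: "'a set \<Rightarrow> ('a \<Rightarrow> 'a \<Rightarrow> bool) \<Rightarrow> 'a \<Rightarrow> 'a \<Rightarrow> 'a set" where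
  "Rset V E x y = {z \<in> V. dist E x z \<noteq> dist E y z}"

definition resolving_function :: "'a set \<Rightarrow> ('a \<Rightarrow> 'a \<Rightarrow> bool) \<Rightarrow> ('a \<Rightarrow> real) \<Rightarrow> bool" where
  "resolving_function V E g \<longleftrightarrow> (\<forall>z\<in>V. 0 \<le> g z \<and> g z \<le> 1) \<and>
     (\<forall>x\<in>V. \<forall>y\<in>V. x \<noteq> y \<longrightarrow> sum g (Rset V E x y) \<ge> 1)"

definition fdim :: "'a set \<Rightarrow> ('a \<Rightarrow> 'a \<Rightarrow> bool) \<Rightarrow> real" where
  "fdim V E = Inf {sum g V | g. resolving_function V E g}"

definition min_resolving_function :: "'a set \<Rightarrow> ('a \<Rightarrow> 'a \<Rightarrow> bool) \<Rightarrow> ('a \<Rightarrow> real) \<Rightarrow> bool" where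
  "min_resolving_function V E g \<longleftrightarrow> resolving_function V E g \<and> sum g V = fdim V E"

end

theory Submission imports Defs begin

lemma walk_Cons_iff: "walk E (x # xs) \<longleftrightarrow> (xs = [] \<or> (E x (hd xs) \<and> walk E xs))"
  by (cases xs) auto

lemma last_take_nth_conv: "i < length xs \<Longrightarrow> last (take (Suc i) xs) = xs ! i"
  by (simp add: take_Suc_conv_app_nth)

lemma walk_ne: "walk E xs \<Longrightarrow> xs \<noteq> []" by auto

lemma walk_append: "xs \<noteq> [] \<Longrightarrow> ys \<noteq> [] \<Longrightarrow>
   walk E (xs @ ys) \<longleftrightarrow> walk E xs \<and> walk E ys \<and> E (last xs) (hd ys)"
proof (induction xs)
  case Nil then show ?case by simp
next
  case (Cons x xs)
  show ?case
  proof (cases "xs = []")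
    case True then show ?thesis using Cons.prems by (cases ys) auto
  next
    case False then show ?thesis using Cons by (auto simp: walk_Cons_iff)
  qed
qed

lemma walk_rev: "(\<And>x y. E x y \<Longrightarrow> E y x) \<Longrightarrow> walk E xs \<Longrightarrow> walk E (rev xs)"
proof (induction xs)
  case Nil then show ?case by simp
next
  case (Cons x xs)
  show ?case
  proof (cases "xs = []")
    case True then show ?thesis by simp
  next
    case False
    then show ?thesis using Cons by (auto simp: walk_Cons_iff walk_append last_rev)
  qed
qed

lemma walk_take: "walk E xs \<Longrightarrow> 0 < n \<Longrightarrow> walk E (take n xs)"
proof (induction xs arbitrary: n)
  case Nil then show ?case by simp
next
  case (Cons x xs)
  then obtain m where n: "n = Suc m" by (cases n) auto
  show ?case
  proof (cases "xs = [] \<or> m = 0")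
    case True then show ?thesis using n by auto
  next
    case False
    then have "walk E (take m xs)" "take m xs \<noteq> []" using Cons by (auto simp: walk_Cons_iff)
    moreover have "hd (take m xs) = hd xs" using False by (simp add: hd_take)
    ultimately show ?thesis using Cons.prems n False by (auto simp: walk_Cons_iff)
  qed
qed

lemma walk_drop: "walk E xs \<Longrightarrow> n < length xs \<Longrightarrow> walk E (drop n xs)"
proof (induction xs arbitrary: n)
  case Nil then show ?case by simp
next
  case (Cons x xs)
  show ?case
  proof (cases n)
    case 0 then show ?thesis using Cons by simp
  next
    case (Suc m) then show ?thesis using Cons by (auto simp: walk_Cons_iff)
  qed
qed

lemma walk_nth: "walk E xs \<Longrightarrow> Suc i < length xs \<Longrightarrow> E (xs ! i) (xs ! Suc i)"
proof (induction xs arbitrary: i)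
  case Nil then show ?case by simp
next
  case (Cons x xs)
  show ?case
  proof (cases i)
    case 0 then show ?thesis using Cons by (cases xs) auto
  next
    case (Suc j) then show ?thesis using Cons by (auto simp: walk_Cons_iff)
  qed
qed

lemma avg:
  fixes s :: "'b \<Rightarrow> real"
  assumes "finite T" "2 \<le> card T" "\<forall>l\<in>T. 0 \<le> s l"
    "\<forall>l\<in>T. \<forall>l'\<in>T. l \<noteq> l' \<longrightarrow> 1 \<le> s l + s l'"
  shows "real (card T) / 2 \<le> sum s T"
proof (cases "\<forall>l\<in>T. 1/2 \<le> s l")
  case True
  then have "sum (\<lambda>_. 1/2) T \<le> sum s T" by (intro sum_mono) auto
  then show ?thesis by simp
next
  case False
  then obtain l0 where l0: "l0 \<in> T" "s l0 < 1/2" by auto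
  have "sum (\<lambda>_. 1 - s l0) (T - {l0}) \<le> sum s (T - {l0})"
    using assms(4) l0 by (intro sum_mono) (smt (verit) DiffE insertI1)
  then have A: "real (card T - 1) * (1 - s l0) \<le> sum s (T - {l0})"
    using assms(1) l0 by (simp add: card_Diff_singleton)
  have S: "sum s T = s l0 + sum s (T - {l0})" using assms(1) l0 by (simp add: sum.remove)
  have c1: "real (card T - 1) = real (card T) - 1" using assms(2) by simp
  have "0 \<le> (real (card T) - 2) * (1/2 - s l0)"
    using assms(2) l0 by (intro mult_nonneg_nonneg) auto
  then have "0 \<le> real (card T)/2 - 1 - real (card T) * s l0 + 2 * s l0"
    by (simp add: algebra_simps)
  moreover have "(real (card T) - 1) * (1 - s l0) = real (card T) - real (card T) * s l0 - 1 + s l0"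
    by (simp add: algebra_simps)
  moreover have "(real (card T) - 1) * (1 - s l0) \<le> sum s (T - {l0})" using A c1 by simp
  ultimately show ?thesis using S by linarith
qed


lemma finite_argmax: "finite S \<Longrightarrow> x0 \<in> S \<Longrightarrow> \<exists>x\<in>S. \<forall>y\<in>S. (f y :: nat) \<le> f x"
proof -
  assume a: "finite S" "x0 \<in> S"
  then have "Max (f ` S) \<in> f ` S" by (intro Max_in) auto
  then obtain x where "x \<in> S" "f x = Max (f ` S)" by auto
  then show ?thesis using a by (metis Max_ge finite_imageI imageI)
qed

lemma finite_argmin: "finite S \<Longrightarrow> x0 \<in> S \<Longrightarrow> \<exists>x\<in>S. \<forall>y\<in>S. f x \<le> (f y :: nat)"
proof -
  assume a: "finite S" "x0 \<in> S"
  then have "Min (f ` S) \<in> f ` S" by (intro Min_in) auto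
  then obtain x where "x \<in> S" "f x = Min (f ` S)" by auto
  then show ?thesis using a by (metis Min_le finite_imageI imageI)
qed

locale tr =
  fixes V :: "'a set" and E :: "'a \<Rightarrow> 'a \<Rightarrow> bool"
  assumes tree: "tree V E"
begin

lemma finV: "finite V" using tree unfolding tree_def graph_def by auto
lemma Ein: "E x y \<Longrightarrow> x \<in> V \<and> y \<in> V" using tree unfolding tree_def graph_def by auto
lemma Esym: "E x y \<Longrightarrow> E y x" using tree unfolding tree_def graph_def by auto
lemma Eirr: "\<not> E x x" using tree unfolding tree_def graph_def by auto
lemma Ene: "E x y \<Longrightarrow> x \<noteq> y" using Eirr by auto
lemma conn: "x \<in> V \<Longrightarrow> y \<in> V \<Longrightarrow> \<exists>xs. walk E xs \<and> hd xs = x \<and> last xs = y"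
  using tree unfolding tree_def connected_graph_def path_def by blast
lemma acyc: "\<not> has_cycle E" using tree unfolding tree_def by auto

abbreviation d where "d \<equiv> dist E"

lemma walk_inV: "walk E xs \<Longrightarrow> hd xs \<in> V \<Longrightarrow> set xs \<subseteq> V"
proof (induction xs)
  case Nil then show ?case by simp
next
  case (Cons x xs)
  show ?case
  proof (cases "xs = []")
    case True then show ?thesis using Cons by simp
  next
    case False then show ?thesis using Cons Ein by (auto simp: walk_Cons_iff)
  qed
qed

lemma dist_ex: "x \<in> V \<Longrightarrow> y \<in> V \<Longrightarrow>
   \<exists>xs. walk E xs \<and> hd xs = x \<and> last xs = y \<and> length xs = Suc (d x y)"
proof -
  assume "x \<in> V" "y \<in> V"
  then obtain xs where xs: "walk E xs" "hd xs = x" "last xs = y" using conn by blast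
  then have "length xs = Suc (length xs - 1)" by (cases xs) auto
  then have "\<exists>n. \<exists>xs. walk E xs \<and> hd xs = x \<and> last xs = y \<and> length xs = Suc n" using xs by blast
  then show ?thesis unfolding dist_def by (rule LeastI_ex)
qed

lemma dist_le: "walk E xs \<Longrightarrow> hd xs = x \<Longrightarrow> last xs = y \<Longrightarrow> d x y \<le> length xs - 1"
proof -
  assume a: "walk E xs" "hd xs = x" "last xs = y"
  then have "length xs = Suc (length xs - 1)" by (cases xs) auto
  then show ?thesis unfolding dist_def using a by (intro Least_le) blast
qed

lemma dist_self: "d x x = 0"
  using dist_le[of "[x]" x x] by simp

lemma dist_0: "x \<in> V \<Longrightarrow> y \<in> V \<Longrightarrow> d x y = 0 \<Longrightarrow> x = y"
proof -
  assume a: "x \<in> V" "y \<in> V" "d x y = 0"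
  then obtain xs where xs: "walk E xs" "hd xs = x" "last xs = y" "length xs = 1"
    using dist_ex by fastforce
  then obtain z where "xs = [z]" by (cases xs) auto
  then show ?thesis using xs by simp
qed

lemma dist_sym: "x \<in> V \<Longrightarrow> y \<in> V \<Longrightarrow> d x y = d y x"
proof -
  have *: "d b a \<le> d a b" if ab: "a \<in> V" "b \<in> V" for a b
  proof -
    obtain xs where xs: "walk E xs" "hd xs = a" "last xs = b" "length xs = Suc (d a b)"
      using dist_ex ab by blast
    have "walk E (rev xs)" using walk_rev[OF Esym xs(1)] by blast
    moreover have "hd (rev xs) = b" "last (rev xs) = a" using xs walk_ne[OF xs(1)]
      by (auto simp: hd_rev last_rev)
    ultimately have "d b a \<le> length (rev xs) - 1" using dist_le by blast
    then show ?thesis using xs by simp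
  qed
  assume "x \<in> V" "y \<in> V" then show ?thesis using * by (meson le_antisym)
qed

lemma dist_tri: "x \<in> V \<Longrightarrow> y \<in> V \<Longrightarrow> z \<in> V \<Longrightarrow> d x z \<le> d x y + d y z"
proof -
  assume a: "x \<in> V" "y \<in> V" "z \<in> V"
  obtain xs where xs: "walk E xs" "hd xs = x" "last xs = y" "length xs = Suc (d x y)"
    using dist_ex a by blast
  obtain ys where ys: "walk E ys" "hd ys = y" "last ys = z" "length ys = Suc (d y z)"
    using dist_ex a by blast
  then obtain ys' where ys': "ys = y # ys'" by (cases ys) auto
  show ?thesis
  proof (cases "ys' = []")
    case True then have "y = z" using ys ys' by simp
    then show ?thesis by simp
  next
    case False
    have "E y (hd ys')" "walk E ys'" using ys(1) ys' False by (auto simp: walk_Cons_iff)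
    then have "walk E (xs @ ys')" using xs False walk_ne[OF xs(1)] by (simp add: walk_append)
    moreover have "hd (xs @ ys') = x" "last (xs @ ys') = z"
      using xs ys ys' False walk_ne[OF xs(1)] by auto
    ultimately have "d x z \<le> length (xs @ ys') - 1" using dist_le by blast
    then show ?thesis using xs ys ys' by simp
  qed
qed

lemma dist_edge: "E x y \<Longrightarrow> d x y = 1"
proof -
  assume e: "E x y"
  have "d x y \<le> length [x,y] - 1" using e by (intro dist_le) auto
  moreover have "d x y \<noteq> 0" using dist_0 Ein[OF e] Ene[OF e] by blast
  ultimately show ?thesis by simp
qed

definition geo where "geo xs x y \<longleftrightarrow> walk E xs \<and> hd xs = x \<and> last xs = y \<and> length xs = Suc (d x y)"

lemma geo_ex: "x \<in> V \<Longrightarrow> y \<in> V \<Longrightarrow> \<exists>xs. geo xs x y"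
  unfolding geo_def using dist_ex by blast

lemma geo_inV: "geo xs x y \<Longrightarrow> x \<in> V \<Longrightarrow> set xs \<subseteq> V"
  unfolding geo_def using walk_inV by blast

lemma geo_nth: assumes g: "geo xs x y" and x: "x \<in> V" and i: "i < length xs"
  shows "d x (xs ! i) = i \<and> d (xs ! i) y = d x y - i"
proof -
  have w: "walk E xs" "hd xs = x" "last xs = y" "length xs = Suc (d x y)" using g unfolding geo_def by auto
  have sub: "set xs \<subseteq> V" using geo_inV g x by blast
  have yV: "y \<in> V" using sub w walk_ne[OF w(1)] by auto
  have iV: "xs ! i \<in> V" using sub i by auto
  have "walk E (take (Suc i) xs)" using walk_take w by blast
  moreover have "hd (take (Suc i) xs) = x" using w i by (cases xs) auto
  moreover have "last (take (Suc i) xs) = xs ! i" using i by (simp add: last_take_nth_conv)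
  ultimately have A: "d x (xs ! i) \<le> i" using dist_le[of "take (Suc i) xs"] i by fastforce
  have "walk E (drop i xs)" using walk_drop w i by blast
  moreover have "hd (drop i xs) = xs ! i" using i by (simp add: hd_drop_conv_nth)
  moreover have "last (drop i xs) = y" using w i by simp
  ultimately have B: "d (xs ! i) y \<le> length xs - i - 1" using dist_le[of "drop i xs"] by fastforce
  have C: "d x y \<le> d x (xs ! i) + d (xs ! i) y" using dist_tri x iV yV by blast
  show ?thesis using A B C w(4) i by linarith
qed

lemma geo_distinct: "geo xs x y \<Longrightarrow> x \<in> V \<Longrightarrow> distinct xs"
  unfolding distinct_conv_nth using geo_nth by metis

lemma geo_in_set: "geo xs x y \<Longrightarrow> x \<in> V \<Longrightarrow> z \<in> set xs \<Longrightarrow> d x z < length xs \<and> z = xs ! (d x z)"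
  by (metis geo_nth in_set_conv_nth)

lemma geo_tl: assumes g: "geo xs x y" and x: "x \<in> V" and l: "2 \<le> length xs"
  shows "geo (tl xs) (xs ! 1) y"
proof -
  have w: "walk E xs" "hd xs = x" "last xs = y" "length xs = Suc (d x y)" using g unfolding geo_def by auto
  have "walk E (drop 1 xs)" using walk_drop[OF w(1), of 1] l by simp
  moreover have "hd (tl xs) = xs ! 1" using l by (cases xs; cases "tl xs") auto
  moreover have "last (tl xs) = y" using w l by (cases xs) auto
  moreover have "d (xs ! 1) y = d x y - 1" using geo_nth[OF g x, of 1] l by simp
  ultimately show ?thesis unfolding geo_def using l w by (simp add: drop_Suc)
qed

lemma cyc:
  assumes xs: "walk E xs" "distinct xs" and ys: "walk E ys" "distinct ys"
    and lst: "last xs = last ys" and h1: "hd xs \<notin> set ys" and h2: "hd ys \<notin> set xs"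
    and e: "E (hd xs) (hd ys)"
  shows False
proof -
  have nx: "xs \<noteq> []" and ny: "ys \<noteq> []" using xs ys by auto
  have "last xs \<in> set ys" using lst ny by simp
  moreover have "length xs - 1 < length xs" using nx by simp
  ultimately have ex: "\<exists>i. i < length xs \<and> xs ! i \<in> set ys" using nx by (metis last_conv_nth)
  define i where "i = (LEAST i. i < length xs \<and> xs ! i \<in> set ys)"
  have i: "i < length xs" "xs ! i \<in> set ys" using LeastI_ex[OF ex] unfolding i_def by auto
  have imin: "xs ! k \<notin> set ys" if "k < i" for k
    using not_less_Least[of k "\<lambda>i. i < length xs \<and> xs ! i \<in> set ys"] that i(1) unfolding i_def by auto
  have i0: "i \<noteq> 0" using i h1 nx by (metis hd_conv_nth)
  obtain j where j: "j < length ys" "ys ! j = xs ! i" using i(2) by (metis in_set_conv_nth)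
  have j0: "j \<noteq> 0" using j h2 ny i(1) by (metis hd_conv_nth nth_mem)
  define c where "c = take (Suc i) xs @ rev (take j ys)"
  have t1: "take (Suc i) xs \<noteq> []" using nx by simp
  have t2: "rev (take j ys) \<noteq> []" using ny j0 by simp
  have "walk E (take (Suc i) xs)" using walk_take xs by blast
  moreover have "walk E (rev (take j ys))" using walk_rev[OF Esym walk_take[OF ys(1)]] j0 by blast
  moreover have "last (take (Suc i) xs) = xs ! i" using i by (simp add: last_take_nth_conv)
  moreover have "hd (rev (take j ys)) = ys ! (j - 1)"
    using last_take_nth_conv[of "j - 1" ys] j j0 by (simp add: hd_rev)
  moreover have "E (xs ! i) (ys ! (j - 1))"
    using walk_nth[OF ys(1), of "j - 1"] j j0 Esym by simp
  ultimately have wc: "walk E c" unfolding c_def using t1 t2 by (simp add: walk_append)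
  have disj: "set (take (Suc i) xs) \<inter> set (take j ys) = {}"
  proof (rule ccontr)
    assume "set (take (Suc i) xs) \<inter> set (take j ys) \<noteq> {}"
    then obtain z where z1: "z \<in> set (take (Suc i) xs)" and z2: "z \<in> set (take j ys)" by blast
    obtain k where k: "k < length (take (Suc i) xs)" "take (Suc i) xs ! k = z"
      using z1 by (metis in_set_conv_nth)
    have kk: "k \<le> i" "xs ! k = z" using k by auto
    show False
    proof (cases "k < i")
      case True then show ?thesis using imin kk z2 by (meson in_set_takeD)
    next
      case False
      then have "z = ys ! j" using kk j by simp
      moreover obtain m where "m < length (take j ys)" "take j ys ! m = z"
        using z2 by (metis in_set_conv_nth)
      ultimately have "ys ! m = ys ! j" "m < j" by auto
      then show ?thesis using ys(2) j(1) nth_eq_iff_index_eq[of ys m j] by simp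
    qed
  qed
  have dc: "distinct c" unfolding c_def using xs(2) ys(2) disj by simp
  have lc: "3 \<le> length c" unfolding c_def using i j j0 i0 by simp
  have "last c = hd ys" unfolding c_def using t2 ny j0 by (simp add: last_rev hd_take)
  moreover have "hd c = hd xs" unfolding c_def using t1 by (simp add: hd_take)
  ultimately have "E (last c) (hd c)" using e Esym by simp
  then have "has_cycle E" unfolding has_cycle_def using wc dc lc by blast
  then show False using acyc by simp
qed

lemma neq: assumes e: "E u w" and z: "z \<in> V" shows "d u z \<noteq> d w z"
proof
  assume eq: "d u z = d w z"
  have uV: "u \<in> V" and wV: "w \<in> V" using Ein e by auto
  obtain xs where xs: "geo xs u z" using geo_ex uV z by blast
  obtain ys where ys: "geo ys w z" using geo_ex wV z by blast
  have duw: "d u w = 1" "d w u = 1" using dist_edge e Esym by auto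
  have "u \<notin> set ys"
  proof
    assume "u \<in> set ys"
    then have "d w u < length ys" "u = ys ! (d w u)" using geo_in_set ys wV by auto
    then have "d u z = d w z - 1" using geo_nth[OF ys wV, of "d w u"] duw by simp
    then have "d w z = 0" using eq by simp
    then show False using dist_0 wV z eq dist_0[OF uV z] Ene[OF e] by auto
  qed
  moreover have "w \<notin> set xs"
  proof
    assume "w \<in> set xs"
    then have "d u w < length xs" "w = xs ! (d u w)" using geo_in_set xs uV by auto
    then have "d w z = d u z - 1" using geo_nth[OF xs uV, of "d u w"] duw by simp
    then have "d u z = 0" using eq by simp
    then show False using dist_0 wV z eq dist_0[OF uV z] Ene[OF e] by auto
  qed
  moreover have "walk E xs" "hd xs = u" "last xs = z" using xs unfolding geo_def by auto
  moreover have "walk E ys" "hd ys = w" "last ys = z" using ys unfolding geo_def by auto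
  ultimately show False using cyc[of xs ys] geo_distinct xs ys uV wV e by auto
qed

lemma ucn: assumes ea: "E v a" and eb: "E v b" and z: "z \<in> V"
  and la: "d a z < d v z" and lb: "d b z < d v z" shows "a = b"
proof (rule ccontr)
  assume ab: "a \<noteq> b"
  have vV: "v \<in> V" and aV: "a \<in> V" and bV: "b \<in> V" using Ein ea eb by auto
  have "d v z \<le> d v a + d a z" "d v z \<le> d v b + d b z" using dist_tri vV aV bV z by auto
  then have da: "d a z = d v z - 1" and db: "d b z = d v z - 1" using la lb dist_edge ea eb by auto
  obtain xs0 where xs0: "geo xs0 a z" using geo_ex aV z by blast
  obtain ys where ys: "geo ys b z" using geo_ex bV z by blast
  have w0: "walk E xs0" "hd xs0 = a" "last xs0 = z" "xs0 \<noteq> []" using xs0 unfolding geo_def by auto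
  have w1: "walk E ys" "hd ys = b" "last ys = z" "ys \<noteq> []" using ys unfolding geo_def by auto
  have vx: "v \<notin> set xs0"
  proof
    assume "v \<in> set xs0"
    then have "d a v < length xs0" "v = xs0 ! (d a v)" using geo_in_set xs0 aV by auto
    then have "d v z = d a z - d a v" using geo_nth[OF xs0 aV, of "d a v"] by simp
    then show False using la by simp
  qed
  have vy: "v \<notin> set ys"
  proof
    assume "v \<in> set ys"
    then have "d b v < length ys" "v = ys ! (d b v)" using geo_in_set ys bV by auto
    then have "d v z = d b z - d b v" using geo_nth[OF ys bV, of "d b v"] by simp
    then show False using lb by simp
  qed
  have bx: "b \<notin> set xs0"
  proof
    assume "b \<in> set xs0"
    then have "d a b < length xs0" "b = xs0 ! (d a b)" using geo_in_set xs0 aV by auto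
    moreover have "length xs0 = Suc (d a z)" using xs0 unfolding geo_def by blast
    ultimately have "d b z = d a z - d a b" "d a b \<le> d a z" using geo_nth[OF xs0 aV, of "d a b"]
      by auto
    then have "d a b = 0" using da db la by simp
    then show False using dist_0 aV bV ab by auto
  qed
  have "walk E (v # xs0)" using w0 ea by (simp add: walk_Cons_iff)
  moreover have "distinct (v # xs0)" using vx geo_distinct[OF xs0 aV] by simp
  moreover have "b \<notin> set (v # xs0)" using bx Ene[OF eb] by auto
  ultimately show False using cyc[of "v # xs0" ys] geo_distinct[OF ys bV] w0 w1 vy eb by auto
qed

definition side where "side u b = {z \<in> V. d b z < d u z}"

lemma side_adj: assumes e: "E u b" and z: "z \<in> V" shows "d u z = d b z + 1 \<or> d b z = d u z + 1"
proof -
  have uV: "u \<in> V" and bV: "b \<in> V" using Ein e by auto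
  have "d u z \<le> d u b + d b z" "d b z \<le> d b u + d u z" using dist_tri uV bV z by auto
  moreover have "d u b = 1" "d b u = 1" using dist_edge e Esym by auto
  moreover have "d u z \<noteq> d b z" using neq e z by blast
  ultimately show ?thesis by linarith
qed

lemma side_in: "E u b \<Longrightarrow> z \<in> side u b \<Longrightarrow> d u z = d b z + 1"
  using side_adj unfolding side_def by fastforce

lemma side_out: "E u b \<Longrightarrow> z \<in> V \<Longrightarrow> z \<notin> side u b \<Longrightarrow> d b z = d u z + 1"
  using side_adj unfolding side_def by fastforce

lemma side_V: "side u b \<subseteq> V" unfolding side_def by auto

lemma side_finite: "finite (side u b)" using finV side_V finite_subset by blast

lemma u_notin_side: "u \<notin> side u b" unfolding side_def using dist_self by auto

lemma b_in_side: "E u b \<Longrightarrow> b \<in> side u b"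
  unfolding side_def using dist_self dist_edge Ein by auto

lemma side_ex: assumes u: "u \<in> V" and z: "z \<in> V" and uz: "z \<noteq> u"
  shows "\<exists>b. E u b \<and> z \<in> side u b"
proof -
  obtain xs where xs: "geo xs u z" using geo_ex u z by blast
  have w: "walk E xs" "hd xs = u" "last xs = z" "length xs = Suc (d u z)" using xs unfolding geo_def by auto
  have "d u z \<noteq> 0" using dist_0 u z uz by auto
  then have l: "2 \<le> length xs" using w by simp
  have "E (xs ! 0) (xs ! 1)" using walk_nth[OF w(1), of 0] l by simp
  moreover have "xs ! 0 = u" using w by (cases xs) auto
  moreover have "d (xs ! 1) z = d u z - 1" using geo_nth[OF xs u, of 1] l by simp
  moreover have "xs ! 1 \<in> V" using geo_inV[OF xs u] l by auto
  ultimately show ?thesis unfolding side_def using z \<open>d u z \<noteq> 0\<close>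
    by (intro exI[of _ "xs ! 1"]) auto
qed

lemma side_uniq: "E u b \<Longrightarrow> E u c \<Longrightarrow> z \<in> side u b \<Longrightarrow> z \<in> side u c \<Longrightarrow> b = c"
  unfolding side_def using ucn by blast

lemma side_closed: assumes e: "E u b" and z: "z \<in> side u b" and zw: "E z w" and wu: "w \<noteq> u"
  shows "w \<in> side u b"
proof (rule ccontr)
  assume nw: "w \<notin> side u b"
  have uV: "u \<in> V" and bV: "b \<in> V" using Ein e by auto
  have zV: "z \<in> V" and wV: "w \<in> V" using Ein zw by auto
  have dz: "d u z = d b z + 1" using side_in e z by blast
  have dw: "d b w = d u w + 1" using side_out e wV nw by blast
  have s1: "d z u = d u z" "d w u = d u w" "d z b = d b z" "d w b = d b w"
    using dist_sym uV bV zV wV by auto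
  have a1: "d z u = d w u + 1 \<or> d w u = d z u + 1" using side_adj[OF zw uV] .
  have a2: "d z b = d w b + 1 \<or> d w b = d z b + 1" using side_adj[OF zw bV] .
  have duw: "d u w + 1 = d u z" and dbw: "d b w = d b z + 1"
    using a1 a2 dz dw s1 by linarith+
  have zb: "z \<noteq> b"
  proof
    assume "z = b"
    then have "d u w = 0" using duw dist_edge[OF e] by simp
    then show False using dist_0 uV wV wu by auto
  qed
  obtain s where s: "E z s" "b \<in> side z s" using side_ex zV bV zb by blast
  have sb: "d s b < d z b" using s unfolding side_def by auto
  have sV: "s \<in> V" using Ein s by auto
  have "d u s \<le> d u b + d b s" using dist_tri uV bV sV by blast
  moreover have "d u b = 1" using dist_edge[OF e] .
  moreover have "d b s = d s b" "d u s = d s u" using dist_sym sV bV uV by auto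
  ultimately have "d s u < d z u" using sb s1 dz by linarith
  moreover have "d w u < d z u" using s1 duw by linarith
  ultimately have "s = w" using ucn[OF s(1) zw uV] by blast
  then have "d w b < d z b" using sb by simp
  then show False using s1 dbw by linarith
qed

lemma closed_walk: "walk E xs \<Longrightarrow> hd xs \<in> A \<Longrightarrow> (\<forall>z\<in>A. \<forall>w. E z w \<longrightarrow> w \<in> A \<or> w = m)
   \<Longrightarrow> m \<notin> set xs \<Longrightarrow> set xs \<subseteq> A"
proof (induction xs)
  case Nil then show ?case by simp
next
  case (Cons x xs)
  show ?case
  proof (cases "xs = []")
    case True then show ?thesis using Cons by simp
  next
    case False
    then have "E x (hd xs)" "walk E xs" using Cons by (auto simp: walk_Cons_iff)
    then have "hd xs \<in> A" using Cons False by force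
    then show ?thesis using Cons \<open>walk E xs\<close> by auto
  qed
qed

lemma side_add: assumes e: "E u b" and z: "z \<in> side u b" and w: "w \<in> V" and nw: "w \<notin> side u b"
  shows "d z w = d z u + d u w"
proof -
  have zV: "z \<in> V" using z side_V by auto
  have uV: "u \<in> V" using Ein e by auto
  obtain xs where xs: "geo xs z w" using geo_ex zV w by blast
  have wk: "walk E xs" "hd xs = z" "last xs = w" "xs \<noteq> []" using xs unfolding geo_def by auto
  have "u \<in> set xs"
  proof (rule ccontr)
    assume "u \<notin> set xs"
    moreover have "\<forall>z\<in>side u b. \<forall>w. E z w \<longrightarrow> w \<in> side u b \<or> w = u"
      using side_closed e by blast
    ultimately have "set xs \<subseteq> side u b" using closed_walk[OF wk(1)] wk z by auto
    then show False using wk nw last_in_set[OF wk(4)] by auto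
  qed
  then have "d z u < length xs" "u = xs ! (d z u)" using geo_in_set xs zV by auto
  then have "d u w = d z w - d z u" using geo_nth[OF xs zV, of "d z u"] by simp
  moreover have "d z u \<le> d z w" using \<open>d z u < length xs\<close> wk xs unfolding geo_def by simp
  ultimately show ?thesis by simp
qed

lemma side_same: assumes e: "E u b" and y: "y \<in> side u b" and z: "z \<in> side u b"
  shows "d y z + 2 \<le> d y u + d u z"
proof -
  have yV: "y \<in> V" and zV: "z \<in> V" using y z side_V by auto
  have uV: "u \<in> V" and bV: "b \<in> V" using Ein e by auto
  have "d y z \<le> d y b + d b z" using dist_tri yV bV zV by blast
  moreover have "d u y = d b y + 1" "d u z = d b z + 1" using side_in e y z by auto
  moreover have "d y b = d b y" "d y u = d u y" using dist_sym yV bV uV by auto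
  ultimately show ?thesis by linarith
qed

lemma path_geo: "walk E xs \<Longrightarrow> distinct xs \<Longrightarrow> hd xs \<in> V \<Longrightarrow> length xs = Suc (d (hd xs) (last xs))"
proof (induction xs)
  case Nil then show ?case by simp
next
  case (Cons a ys)
  show ?case
  proof (cases "ys = []")
    case True then show ?thesis using dist_self by simp
  next
    case False
    let ?b = "last ys" and ?a = "hd ys"
    have e: "E a ?a" and wy: "walk E ys" using Cons.prems False by (auto simp: walk_Cons_iff)
    have aV: "a \<in> V" and a'V: "?a \<in> V" using Ein e by auto
    have ny: "a \<notin> set ys" "distinct ys" using Cons.prems by auto
    have IH: "length ys = Suc (d ?a ?b)" using Cons.IH wy ny a'V by blast
    have bV: "?b \<in> V" using walk_inV[OF wy a'V] False by auto
    have gy: "geo ys ?a ?b" unfolding geo_def using wy IH by simp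
    have "d a ?b = d ?a ?b + 1"
    proof -
      have "d a ?b = d ?a ?b + 1 \<or> d ?a ?b = d a ?b + 1" using side_adj[OF e bV] .
      moreover have "d ?a ?b \<noteq> d a ?b + 1"
      proof
        assume h: "d ?a ?b = d a ?b + 1"
        then have l: "2 \<le> length ys" using IH by simp
        have "E (ys ! 0) (ys ! 1)" using walk_nth[OF wy, of 0] l by simp
        then have e1: "E ?a (ys ! 1)" using False by (simp add: hd_conv_nth)
        have "d (ys ! 1) ?b < d ?a ?b" using geo_nth[OF gy a'V, of 1] l h by simp
        moreover have "d a ?b < d ?a ?b" using h by simp
        ultimately have "a = ys ! 1" using ucn[OF Esym[OF e] e1 bV] by blast
        then show False using ny l by auto
      qed
      ultimately show ?thesis by blast
    qed
    then show ?thesis using IH False by simp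
  qed
qed

lemma leaf_not_major: "leaf V E l \<Longrightarrow> \<not> major V E l"
  unfolding leaf_def major_def by auto

lemma term_sub: "terminals V E v \<subseteq> V" unfolding terminals_def leaf_def by auto
lemma term_fin: "finite (terminals V E v)" using term_sub finV finite_subset by blast

lemma nbr_fin: "finite {w \<in> V. E z w}" using finV by simp

lemma major_card: "major V E z \<Longrightarrow> 3 \<le> card {w \<in> V. E z w}" unfolding major_def degree_def by auto

lemma not_major_card: "z \<in> V \<Longrightarrow> \<not> major V E z \<Longrightarrow> card {w \<in> V. E z w} \<le> 2"
  unfolding major_def degree_def by auto

lemma three_major: assumes "z \<in> V" "E z a" "E z b" "E z c" "a \<noteq> b" "a \<noteq> c" "b \<noteq> c"
  shows "major V E z"
proof -
  have "{a, b, c} \<subseteq> {w \<in> V. E z w}" using assms Ein by auto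
  then have "card {a, b, c} \<le> card {w \<in> V. E z w}" using nbr_fin by (rule card_mono[rotated])
  then show ?thesis using assms unfolding major_def degree_def by auto
qed

lemma far_leaf: assumes e: "E u b" shows "\<exists>l\<in>side u b. leaf V E l"
proof -
  let ?S = "side u b"
  have uV: "u \<in> V" using Ein e by auto
  obtain l where l: "l \<in> ?S" "\<forall>z\<in>?S. d u z \<le> d u l"
    using finite_argmax[OF side_finite b_in_side[OF e], where f="d u"] by blast
  have lV: "l \<in> V" using l side_V by auto
  have lu: "l \<noteq> u" using l u_notin_side by metis
  obtain n where n: "E l n" "u \<in> side l n" using side_ex lV uV lu by metis
  have "{w \<in> V. E l w} \<subseteq> {n}"
  proof
    fix w assume "w \<in> {w \<in> V. E l w}"
    then have w: "w \<in> V" "E l w" by auto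
    have "d u w \<le> d u l"
    proof (cases "w = u")
      case True then show ?thesis using dist_self by simp
    next
      case False then show ?thesis using side_closed[OF e l(1) w(2)] l(2) by blast
    qed
    moreover have "d l u = d w u + 1 \<or> d w u = d l u + 1" using side_adj[OF w(2) uV] .
    moreover have "d l u = d u l" "d w u = d u w" using dist_sym lV uV w by auto
    ultimately have "d w u < d l u" by linarith
    moreover have "d n u < d l u" using n unfolding side_def by auto
    ultimately show "w \<in> {n}" using ucn[OF w(2) n(1) uV] by blast
  qed
  moreover have "n \<in> {w \<in> V. E l w}" using Ein n by auto
  ultimately have "{w \<in> V. E l w} = {n}" by blast
  then show ?thesis using l lV unfolding leaf_def degree_def by auto
qed

lemma leg_leaf: assumes e: "E m c" and nm: "\<forall>z\<in>side m c. \<not> major V E z"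
  shows "\<exists>l\<in>side m c. l \<in> terminals V E m"
proof -
  obtain l where l: "l \<in> side m c" "leaf V E l" using far_leaf[OF e] by blast
  have mV: "m \<in> V" using Ein e by auto
  have "d l m < d l w" if w: "major V E w" "w \<noteq> m" for w
  proof -
    have wV: "w \<in> V" using w unfolding major_def by auto
    have "w \<notin> side m c" using nm w by blast
    then have "d l w = d l m + d m w" using side_add[OF e l(1) wV] by blast
    moreover have "d m w \<noteq> 0" using dist_0 mV wV w by auto
    ultimately show ?thesis by simp
  qed
  then show ?thesis using l unfolding terminals_def by blast
qed

lemma two_legs_M2: assumes mj: "major V E m" and e1: "E m c1" and e2: "E m c2" and c12: "c1 \<noteq> c2"
  and n1: "\<forall>z\<in>side m c1. \<not> major V E z" and n2: "\<forall>z\<in>side m c2. \<not> major V E z"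
  shows "m \<in> M2 V E"
proof -
  obtain l1 where l1: "l1 \<in> side m c1" "l1 \<in> terminals V E m" using leg_leaf[OF e1 n1] by blast
  obtain l2 where l2: "l2 \<in> side m c2" "l2 \<in> terminals V E m" using leg_leaf[OF e2 n2] by blast
  have "l1 \<noteq> l2" using side_uniq[OF e1 e2] l1 l2 c12 by blast
  then have "card {l1, l2} = 2" by simp
  moreover have "card {l1, l2} \<le> ter V E m" unfolding ter_def
    using l1 l2 term_fin by (intro card_mono) auto
  ultimately show ?thesis unfolding M2_def ext_major_def using mj by auto
qed

lemma MS: assumes e: "E u b" and z0: "z0 \<in> side u b" "major V E z0"
  shows "\<exists>v\<in>side u b. v \<in> M2 V E"
proof -
  let ?S = "{z \<in> side u b. major V E z}"
  have fS: "finite ?S" using side_finite by simp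
  have z0S: "z0 \<in> ?S" using z0 by blast
  obtain m where m: "m \<in> ?S" "\<forall>z\<in>?S. d u z \<le> d u m"
    using finite_argmax[OF fS z0S, where f="d u"] by blast
  have uV: "u \<in> V" using Ein e by auto
  have mV: "m \<in> V" using m side_V by auto
  have ms: "m \<in> side u b" using m by blast
  have mu: "m \<noteq> u" using ms u_notin_side by blast
  let ?N = "{w \<in> V. E m w}"
  let ?N' = "{w \<in> ?N. \<not> d w u < d m u}"
  have c3: "3 \<le> card ?N" using major_card m by auto
  have "\<forall>a\<in>?N - ?N'. \<forall>b\<in>?N - ?N'. a = b"
  proof (intro ballI)
    fix a b assume a: "a \<in> ?N - ?N'" and b: "b \<in> ?N - ?N'"
    have "E m a" "d a u < d m u" using a by auto
    moreover have "E m b" "d b u < d m u" using b by auto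
    ultimately show "a = b" using ucn uV by blast
  qed
  then have "card (?N - ?N') \<le> Suc 0"
    using nbr_fin card_le_Suc0_iff_eq[of "?N - ?N'"] by blast
  moreover have "card (?N - ?N') = card ?N - card ?N'" using finV by (intro card_Diff_subset) auto
  moreover have "card ?N' \<le> card ?N" using nbr_fin by (intro card_mono) auto
  ultimately have c2: "2 \<le> card ?N'" using c3 by linarith
  have "\<not> (\<forall>a\<in>?N'. \<forall>b\<in>?N'. a = b)"
  proof
    assume "\<forall>a\<in>?N'. \<forall>b\<in>?N'. a = b"
    moreover have "finite ?N'" using finV by simp
    ultimately have "card ?N' \<le> Suc 0" using card_le_Suc0_iff_eq[of ?N'] by blast
    then show False using c2 by simp
  qed
  then obtain c1 c2 where cc: "c1 \<in> ?N'" "c2 \<in> ?N'" "c1 \<noteq> c2" by blast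
  have nomaj: "\<forall>z\<in>side m c. \<not> major V E z" if c: "c \<in> ?N'" for c
  proof (intro ballI notI)
    fix z assume z: "z \<in> side m c" "major V E z"
    have ec: "E m c" using c by auto
    have zV: "z \<in> V" using z side_V by auto
    have "u \<notin> side m c" using c unfolding side_def by auto
    then have dz: "d z u = d z m + d m u" using side_add[OF ec z(1) uV] by blast
    have zs: "z \<in> side u b"
    proof (rule ccontr)
      assume "z \<notin> side u b"
      then have "d m z = d m u + d u z" using side_add[OF e _ zV] m by blast
      moreover have "d z m = d m z" "d z u = d u z" using dist_sym zV mV uV by auto
      ultimately have "d m u = 0" using dz by linarith
      then show False using dist_0 mV uV mu by auto
    qed
    then have "d u z \<le> d u m" using m z by blast
    moreover have "z \<noteq> m" using z u_notin_side by metis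
    then have "d z m \<noteq> 0" using dist_0 zV mV by auto
    moreover have "d z u = d u z" "d m u = d u m" using dist_sym zV mV uV by auto
    ultimately show False using dz by linarith
  qed
  have "m \<in> M2 V E" using two_legs_M2[of m c1 c2] m cc nomaj by auto
  then show ?thesis using m by blast
qed

lemma geo_term_nomajor: assumes g: "geo P v l" and vV: "v \<in> V" and lt: "l \<in> terminals V E v"
  and z: "z \<in> set P" and zv: "z \<noteq> v" shows "\<not> major V E z"
proof
  assume mz: "major V E z"
  have lV: "l \<in> V" using lt term_sub by auto
  have zV: "z \<in> V" using geo_inV[OF g vV] z by auto
  have i: "d v z < length P" "z = P ! (d v z)" using geo_in_set[OF g vV z] by auto
  have "d z l = d v l - d v z" using geo_nth[OF g vV i(1)] i(2) by simp
  moreover have "d v z \<noteq> 0" using dist_0 vV zV zv by auto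
  moreover have "length P = Suc (d v l)" using g unfolding geo_def by auto
  ultimately have "d z l < d v l" using i by linarith
  moreover have "d l v < d l z" using lt mz zv unfolding terminals_def by blast
  moreover have "d z l = d l z" "d v l = d l v" using dist_sym zV lV vV by auto
  ultimately show False by linarith
qed

lemma leg: assumes mV: "m \<in> V" and lt: "l \<in> terminals V E m" and e: "E m e"
  and ls: "l \<in> side m e" and g: "geo P m l"
  shows "side m e \<subseteq> set P"
proof
  fix t assume t: "t \<in> side m e"
  have lV: "l \<in> V" using lt term_sub by auto
  have eV: "e \<in> V" using Ein e by auto
  have tV: "t \<in> V" using t side_V by blast
  have wP: "walk E P" "hd P = m" "last P = l" "length P = Suc (d m l)" using g unfolding geo_def by auto
  have lm: "l \<noteq> m" using ls u_notin_side by metis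
  then have k1: "d m l \<noteq> 0" using dist_0 mV lV by auto
  have P0: "P ! 0 = m" using wP by (cases P) auto
  have e1: "E m (P ! 1)" using walk_nth[OF wP(1), of 0] P0 wP(4) k1 by simp
  have "d (P ! 1) l < d m l" using geo_nth[OF g mV, of 1] wP(4) k1 by simp
  moreover have "d e l < d m l" using ls unfolding side_def by auto
  ultimately have eP: "e = P ! 1" using ucn[OF e e1 lV] by blast
  let ?A = "set P - {m}"
  have cl: "\<forall>z\<in>?A. \<forall>w. E z w \<longrightarrow> w \<in> ?A \<or> w = m"
  proof (intro ballI allI impI)
    fix z w assume z: "z \<in> ?A" and zw: "E z w"
    have zP: "z \<in> set P" and zm: "z \<noteq> m" using z by auto
    have zV: "z \<in> V" using Ein zw by blast
    define i where "i = d m z"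
    have i: "i < length P" "z = P ! i" using geo_in_set[OF g mV zP] unfolding i_def by auto
    have i0: "i \<noteq> 0"
    proof
      assume "i = 0" then show False using i(2) P0 zm by simp
    qed
    have nm: "\<not> major V E z" using geo_term_nomajor[OF g mV lt zP zm] .
    have "w \<in> set P"
    proof (cases "i < d m l")
      case True
      have "E (P ! (i - 1)) (P ! i)" using walk_nth[OF wP(1), of "i - 1"] i i0 by simp
      then have ea: "E z (P ! (i - 1))" using i(2) Esym by blast
      have ec: "E z (P ! (i + 1))" using walk_nth[OF wP(1), of i] i True wP(4) by simp
      have dd: "d m (P ! (i - 1)) = i - 1" "d m (P ! (i + 1)) = i + 1"
        using geo_nth[OF g mV, of "i - 1"] geo_nth[OF g mV, of "i + 1"] i True wP(4) by auto
      have ac: "P ! (i - 1) \<noteq> P ! (i + 1)"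
      proof
        assume "P ! (i - 1) = P ! (i + 1)"
        then have "i - 1 = i + 1" using dd by simp
        then show False by simp
      qed
      have il: "i - 1 < length P" "i + 1 < length P" using i True wP(4) by auto
      have inP: "P ! (i - 1) \<in> set P" "P ! (i + 1) \<in> set P" using nth_mem[OF il(1)] nth_mem[OF il(2)] by auto
      show ?thesis
      proof (rule ccontr)
        assume "w \<notin> set P"
        then have "w \<noteq> P ! (i - 1)" "w \<noteq> P ! (i + 1)" using inP by auto
        then have "major V E z" using three_major[OF zV ea ec zw] ac by auto
        then show False using nm by blast
      qed
    next
      case False
      then have "i = d m l" using i wP(4) by simp
      moreover have "P \<noteq> []" using wP(4) by auto
      ultimately have zl: "z = l" using i wP(3,4) last_conv_nth[of P] by simp
      have "E (P ! (i - 1)) (P ! i)" using walk_nth[OF wP(1), of "i - 1"] i i0 by simp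
      then have ea: "E z (P ! (i - 1))" using i(2) Esym by blast
      have "leaf V E l" using lt unfolding terminals_def by blast
      then have "card {w \<in> V. E z w} = 1" using zl unfolding leaf_def degree_def by blast
      then obtain q where q: "{w \<in> V. E z w} = {q}" by (metis card_1_singletonE)
      have "P ! (i - 1) \<in> {w \<in> V. E z w}" using ea Ein by blast
      moreover have "w \<in> {w \<in> V. E z w}" using zw Ein by blast
      moreover have "\<forall>x. x \<in> {w \<in> V. E z w} \<longrightarrow> x = q" using q by simp
      ultimately have "w = P ! (i - 1)" by metis
      moreover have "i - 1 < length P" using i by simp
      ultimately show ?thesis using nth_mem by metis
    qed
    then show "w \<in> ?A \<or> w = m" by blast
  qed
  obtain R where R: "geo R e t" using geo_ex eV tV by blast
  have wR: "walk E R" "hd R = e" "last R = t" "R \<noteq> []" using R unfolding geo_def by auto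
  have mR: "m \<notin> set R"
  proof
    assume "m \<in> set R"
    then have "d e m < length R" "m = R ! (d e m)" using geo_in_set[OF R eV] by auto
    then have "d m t = d e t - d e m" using geo_nth[OF R eV, of "d e m"] by simp
    then show False using t unfolding side_def by auto
  qed
  have "1 < length P" using wP(4) k1 by simp
  then have "P ! 1 \<in> set P" by (rule nth_mem)
  moreover have "P ! 1 \<noteq> m" using Ene[OF e1] by auto
  ultimately have "hd R \<in> ?A" using wR eP by auto
  then have "set R \<subseteq> ?A" using closed_walk[OF wR(1) _ cl mR] by blast
  moreover have "t \<in> set R" using wR(3) last_in_set[OF wR(4)] by simp
  ultimately show "t \<in> set P" by blast
qed

lemma own: assumes l: "leaf V E l" and ex: "\<exists>w. major V E w"
  shows "\<exists>ow. major V E ow \<and> l \<in> terminals V E ow"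
proof -
  let ?M = "{w. major V E w}"
  have fM: "finite ?M" using finV by (rule finite_subset[rotated]) (auto simp: major_def)
  obtain w0 where w0: "w0 \<in> ?M" using ex by blast
  obtain ow where ow: "ow \<in> ?M" "\<forall>w\<in>?M. d l ow \<le> d l w"
    using finite_argmin[OF fM w0, where f="d l"] by blast
  have lV: "l \<in> V" using l unfolding leaf_def by blast
  have oV: "ow \<in> V" using ow unfolding major_def by blast
  have "d l ow < d l w" if w: "major V E w" "w \<noteq> ow" for w
  proof (rule ccontr)
    assume "\<not> d l ow < d l w"
    moreover have "d l ow \<le> d l w" using ow w by blast
    ultimately have k: "d l w = d l ow" by simp
    define k where "k = d l ow"
    have wV: "w \<in> V" using w unfolding major_def by blast
    have lo: "l \<noteq> ow" using leaf_not_major l ow by blast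
    then have k0: "k \<noteq> 0" using dist_0 lV oV unfolding k_def by blast
    obtain P where P: "geo P l ow" using geo_ex lV oV by blast
    obtain Q where Q: "geo Q l w" using geo_ex lV wV by blast
    have wP: "walk E P" "hd P = l" "last P = ow" "length P = Suc k" using P unfolding geo_def k_def by auto
    have wQ: "walk E Q" "hd Q = l" "last Q = w" "length Q = Suc k" using Q k unfolding geo_def k_def by auto
    have P0: "P ! 0 = l" using wP by (cases P) auto
    have Q0: "Q ! 0 = l" using wQ by (cases Q) auto
    have "P \<noteq> []" "Q \<noteq> []" using wP wQ by auto
    then have Pk: "P ! k = ow" and Qk: "Q ! k = w" using wP wQ last_conv_nth[of P] last_conv_nth[of Q] by simp_all
    let ?J = "{j. j \<le> k \<and> P ! j = Q ! j}"
    have fJ: "finite ?J" by (rule finite_subset[of _ "{..k}"]) auto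
    have J0: "0 \<in> ?J" using P0 Q0 by simp
    define j where "j = Max ?J"
    have jJ: "j \<in> ?J" unfolding j_def using fJ J0 by (intro Max_in) auto
    have jk: "j < k"
    proof -
      have "j \<le> k" using jJ by blast
      moreover have "j \<noteq> k"
      proof
        assume "j = k" then have "P ! k = Q ! k" using jJ by blast
        then show False using Pk Qk w(2) by simp
      qed
      ultimately show ?thesis by simp
    qed
    have jn: "P ! (j + 1) \<noteq> Q ! (j + 1)"
    proof
      assume "P ! (j + 1) = Q ! (j + 1)"
      then have "j + 1 \<in> ?J" using jk by simp
      then have "j + 1 \<le> j" unfolding j_def using fJ by (intro Max_ge) auto
      then show False by simp
    qed
    define p where "p = P ! j"
    have pQ: "Q ! j = p" using jJ p_def by simp
    have e1: "E p (P ! (j + 1))" using walk_nth[OF wP(1), of j] jk wP(4) p_def by simp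
    have e2: "E p (Q ! (j + 1))" using walk_nth[OF wQ(1), of j] jk wQ(4) pQ by simp
    have pV: "p \<in> V" using Ein e1 by blast
    show False
    proof (cases "j = 0")
      case True
      then have "p = l" using P0 p_def by simp
      then have "{P ! (j + 1), Q ! (j + 1)} \<subseteq> {w \<in> V. E l w}" using e1 e2 Ein by blast
      then have "card {P ! (j + 1), Q ! (j + 1)} \<le> card {w \<in> V. E l w}"
        using nbr_fin by (rule card_mono[rotated])
      then show False using jn l unfolding leaf_def degree_def by simp
    next
      case False
      have "E (P ! (j - 1)) (P ! Suc (j - 1))" using walk_nth[OF wP(1), of "j - 1"] False jk wP(4) by simp
      then have "E (P ! (j - 1)) p" using False p_def by simp
      then have e0: "E p (P ! (j - 1))" using Esym by blast
      have d1: "d l (P ! (j - 1)) = j - 1" using geo_nth[OF P lV, of "j - 1"] jk wP(4) by simp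
      have d2: "d l (P ! (j + 1)) = j + 1" using geo_nth[OF P lV, of "j + 1"] jk wP(4) by simp
      have d3: "d l (Q ! (j + 1)) = j + 1" using geo_nth[OF Q lV, of "j + 1"] jk wQ(4) by simp
      have n1: "P ! (j - 1) \<noteq> P ! (j + 1)"
      proof
        assume "P ! (j - 1) = P ! (j + 1)"
        then have "j - 1 = j + 1" using d1 d2 by simp
        then show False by simp
      qed
      have n2: "P ! (j - 1) \<noteq> Q ! (j + 1)"
      proof
        assume "P ! (j - 1) = Q ! (j + 1)"
        then have "j - 1 = j + 1" using d1 d3 by simp
        then show False by simp
      qed
      have mp: "major V E p" using three_major[OF pV e0 e1 e2 n1 n2 jn] .
      have "d l p = j" using geo_nth[OF P lV, of j] jk wP(4) p_def by simp
      then have "d l p < d l ow" using jk k_def by simp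
      moreover have "d l ow \<le> d l p" using ow mp by blast
      ultimately show False by simp
    qed
  qed
  then show ?thesis using ow l unfolding terminals_def by blast
qed

lemma Tv_sub: "v \<in> V \<Longrightarrow> Tv V E v \<subseteq> V"
  unfolding Tv_def path_def using walk_inV by blast

lemma Tv_fin: "v \<in> V \<Longrightarrow> finite (Tv V E v)" using Tv_sub finV finite_subset by blast

lemma geo_path: "geo P v l \<Longrightarrow> v \<in> V \<Longrightarrow> path E P v l"
  unfolding path_def using geo_distinct unfolding geo_def by blast

lemma geo_Tv: "geo P v l \<Longrightarrow> v \<in> V \<Longrightarrow> l \<in> terminals V E v \<Longrightarrow> set P \<subseteq> Tv V E v"
  unfolding Tv_def using geo_path by blast

lemma side_nomajor: assumes vV: "v \<in> V" and lt: "l \<in> terminals V E v" and e: "E v e"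
  and ls: "l \<in> side v e" and g: "geo P v l" shows "\<forall>z\<in>side v e. \<not> major V E z"
proof
  fix z assume z: "z \<in> side v e"
  have "z \<in> set P" using leg[OF vV lt e ls g] z by blast
  moreover have "z \<noteq> v" using z u_notin_side by metis
  ultimately show "\<not> major V E z" using geo_term_nomajor[OF g vV lt] by blast
qed

lemma Tv_side: assumes vV: "v \<in> V" and z: "z \<in> Tv V E v" and zv: "z \<noteq> v"
  shows "\<exists>e. E v e \<and> z \<in> side v e \<and> (\<forall>z'\<in>side v e. \<not> major V E z')"
proof -
  obtain l Q where lt: "l \<in> terminals V E v" and pQ: "path E Q v l" and zQ: "z \<in> set Q"
    using z zv unfolding Tv_def by blast
  have wQ: "walk E Q" "distinct Q" "hd Q = v" "last Q = l" using pQ unfolding path_def by auto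
  have "length Q = Suc (d v l)" using path_geo[OF wQ(1) wQ(2)] wQ vV by simp
  then have g: "geo Q v l" unfolding geo_def using wQ by simp
  have zV: "z \<in> V" and lV: "l \<in> V" using geo_inV[OF g vV] zQ lt term_sub by auto
  define i where "i = d v z"
  have i: "i < length Q" "z = Q ! i" using geo_in_set[OF g vV zQ] unfolding i_def by auto
  have i0: "i \<noteq> 0" using dist_0 vV zV zv unfolding i_def by blast
  have l2: "2 \<le> length Q" using i i0 by simp
  have Q0: "Q ! 0 = v" using wQ by (cases Q) auto
  have e: "E v (Q ! 1)" using walk_nth[OF wQ(1), of 0] Q0 l2 by simp
  have gt: "geo (tl Q) (Q ! 1) l" using geo_tl[OF g vV l2] .
  have e1V: "Q ! 1 \<in> V" using Ein e by blast
  have "tl Q ! (i - 1) = z" using i i0 by (simp add: nth_tl)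
  moreover have "i - 1 < length (tl Q)" using i i0 by simp
  ultimately have "d (Q ! 1) z = i - 1" using geo_nth[OF gt e1V, of "i - 1"] by simp
  then have zs: "z \<in> side v (Q ! 1)" unfolding side_def i_def using zV i0 i_def by simp
  have "d (Q ! 1) l = d v l - 1" using geo_nth[OF g vV, of 1] l2 by simp
  moreover have "d v l \<noteq> 0" using l2 \<open>length Q = Suc (d v l)\<close> by simp
  ultimately have ls: "l \<in> side v (Q ! 1)" unfolding side_def using lV by simp
  show ?thesis using e zs side_nomajor[OF vV lt e ls g] by blast
qed

lemma Tv_disj: assumes v: "major V E v" and w: "major V E w" and vw: "v \<noteq> w"
  shows "(Tv V E v - {v}) \<inter> (Tv V E w - {w}) = {}"
proof (rule ccontr)
  assume "(Tv V E v - {v}) \<inter> (Tv V E w - {w}) \<noteq> {}"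
  then obtain z where z1: "z \<in> Tv V E v" "z \<noteq> v" and z2: "z \<in> Tv V E w" "z \<noteq> w" by blast
  have vV: "v \<in> V" and wV: "w \<in> V" using v w unfolding major_def by auto
  obtain e where e: "E v e" "z \<in> side v e" "\<forall>z'\<in>side v e. \<not> major V E z'"
    using Tv_side[OF vV z1] by blast
  obtain f where f: "E w f" "z \<in> side w f" "\<forall>z'\<in>side w f. \<not> major V E z'"
    using Tv_side[OF wV z2] by blast
  have "w \<notin> side v e" using e w by blast
  then have a: "d z w = d z v + d v w" using side_add[OF e(1) e(2) wV] by blast
  have "v \<notin> side w f" using f v by blast
  then have b: "d z v = d z w + d w v" using side_add[OF f(1) f(2) vV] by blast
  have "d v w = 0" using a b by simp
  then show False using dist_0 vV wV vw by blast
qed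

lemma M2_major: "v \<in> M2 V E \<Longrightarrow> major V E v"
  unfolding M2_def ext_major_def by blast

lemma major_V: "major V E v \<Longrightarrow> v \<in> V" unfolding major_def by blast

lemma caseA: assumes v: "v \<in> M2 V E" and x: "x \<in> V" and y: "y \<in> V" and dxy: "d x v \<noteq> d y v"
  and lt: "l \<in> terminals V E v" shows "d x l \<noteq> d y l"
proof -
  have mj: "major V E v" using M2_major v .
  have vV: "v \<in> V" using major_V mj .
  have lV: "l \<in> V" using lt term_sub by blast
  have lv: "l \<noteq> v" using lt mj leaf_not_major unfolding terminals_def by blast
  obtain e where e: "E v e" "l \<in> side v e" using side_ex[OF vV lV lv] by blast
  obtain P where g: "geo P v l" using geo_ex vV lV by blast
  have lg: "side v e \<subseteq> set P" using leg[OF vV lt e g] .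
  have lenP: "length P = Suc (d v l)" using g unfolding geo_def by blast
  have fin: "d z l + d v z = d v l \<and> 1 \<le> d v z" if z: "z \<in> side v e" for z
  proof -
    have zP: "z \<in> set P" using lg z by blast
    have zV: "z \<in> V" using z side_V by blast
    have i: "d v z < length P" "z = P ! (d v z)" using geo_in_set[OF g vV zP] by auto
    have "d z l = d v l - d v z" using geo_nth[OF g vV i(1)] i(2) by simp
    moreover have "z \<noteq> v" using z u_notin_side by metis
    then have "d v z \<noteq> 0" using dist_0 vV zV by blast
    ultimately show ?thesis using i lenP by simp
  qed
  have fout: "d l z = d l v + d v z" if z: "z \<in> V" "z \<notin> side v e" for z
    using side_add[OF e(1) e(2) z] .
  have s: "d x v = d v x" "d y v = d v y" "d x l = d l x" "d y l = d l y" "d l v = d v l"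
    using dist_sym x y vV lV by auto
  show ?thesis
  proof (cases "x \<in> side v e")
    case True note xin = this
    show ?thesis
    proof (cases "y \<in> side v e")
      case True
      then show ?thesis using fin[OF xin] fin[OF True] s dxy by auto
    next
      case False
      then show ?thesis using fin[OF xin] fout[OF y False] s by auto
    qed
  next
    case False note xout = this
    show ?thesis
    proof (cases "y \<in> side v e")
      case True
      then show ?thesis using fin[OF True] fout[OF x xout] s by auto
    next
      case False
      then show ?thesis using fout[OF x xout] fout[OF y False] s dxy by auto
    qed
  qed
qed

lemma caseB: assumes x: "x \<in> V" and y: "y \<in> V" and xy: "x \<noteq> y"
  and B: "\<forall>v\<in>M2 V E. d x v = d y v" and ex: "\<exists>w. major V E w"
  shows "\<exists>l. (\<exists>ow\<in>M2 V E. l \<in> terminals V E ow) \<and> d x l < d y l"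
proof -
  obtain a where ea: "E x a" and ay: "y \<in> side x a" using side_ex[OF x y] xy by metis
  have eax: "E a x" using Esym ea by blast
  have aV: "a \<in> V" using Ein ea by blast
  have dxa: "d x a = 1" "d a x = 1" using dist_edge ea eax by auto
  have yn: "y \<notin> side a x"
  proof
    assume "y \<in> side a x"
    then have "d x y < d a y" unfolding side_def by blast
    moreover have "d a y < d x y" using ay unfolding side_def by blast
    ultimately show False by simp
  qed
  have xin: "x \<in> side a x" unfolding side_def using x dxa dist_self by simp
  have closer: "d z x < d z y" if z: "z \<in> side a x" for z
  proof -
    have zV: "z \<in> V" using z side_V by blast
    have "d z y = d z a + d a y" using side_add[OF eax z y yn] .
    moreover have "d x z < d a z" using z unfolding side_def by blast
    moreover have "d x z = d z x" "d a z = d z a" using dist_sym x zV aV by auto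
    ultimately show ?thesis by simp
  qed
  have noM2: "z \<notin> M2 V E" if z: "z \<in> side a x" for z
  proof
    assume "z \<in> M2 V E"
    then have "d x z = d y z" using B by blast
    moreover have zV: "z \<in> V" using z side_V by blast
    then have "d x z = d z x" "d y z = d z y" using dist_sym x y by auto
    ultimately show False using closer[OF z] by simp
  qed
  have nomaj: "\<forall>z\<in>side a x. \<not> major V E z" using MS[OF eax] noM2 by blast
  obtain lx where lx: "lx \<in> side a x" "leaf V E lx" using far_leaf[OF eax] by blast
  have lxV: "lx \<in> V" using lx side_V by blast
  have cl: "d lx x < d lx y" using closer[OF lx(1)] .
  obtain ow where ow: "major V E ow" "lx \<in> terminals V E ow" using own[OF lx(2) ex] by blast
  have owV: "ow \<in> V" using major_V ow by blast
  have "ow \<in> M2 V E"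
  proof (rule ccontr)
    assume nM2: "ow \<notin> M2 V E"
    have "ter V E ow \<ge> 1" unfolding ter_def using ow term_fin
      by (metis One_nat_def Suc_leI card_gt_0_iff empty_iff)
    then have "ter V E ow < 2" using nM2 ow unfolding M2_def ext_major_def by auto
    then have "card (terminals V E ow) \<le> Suc 0" unfolding ter_def by simp
    then have onlyl: "\<forall>l'\<in>terminals V E ow. l' = lx"
      using card_le_Suc0_iff_eq[OF term_fin] ow by blast
    have owns: "ow \<notin> side a x" using nomaj ow by blast
    have lxo: "lx \<noteq> ow" using leaf_not_major lx ow by blast
    obtain e where e: "E ow e" "lx \<in> side ow e" using side_ex[OF owV lxV lxo] by blast
    have s1: "d lx ow = d lx a + d a ow" using side_add[OF eax lx(1) owV owns] .
    have s2: "d x ow = d x a + d a ow" using side_add[OF eax xin owV owns] .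
    have s3: "d a lx = d x lx + 1" using side_in[OF eax lx(1)] .
    have sy: "d a lx = d lx a" "d x lx = d lx x" "d ow lx = d lx ow" "d ow x = d x ow"
      using dist_sym aV lxV x owV by auto
    have between: "d ow lx = d lx x + d x ow" using s1 s2 s3 sy dxa by simp
    have xo: "x \<noteq> ow" using xin owns by blast
    have xe: "x \<in> side ow e"
    proof -
      obtain f where f: "E ow f" "x \<in> side ow f" using side_ex[OF owV x xo] by blast
      show ?thesis
      proof (cases "f = e")
        case True then show ?thesis using f by simp
      next
        case False
        then have "lx \<notin> side ow f" using side_uniq[OF e(1) f(1) e(2)] by blast
        then have "d x lx = d x ow + d ow lx" using side_add[OF f(1) f(2) lxV] by blast
        then have "d x ow = 0" using between sy by simp
        then show ?thesis using dist_0 x owV xo by blast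
      qed
    qed
    have xout: "x \<notin> side ow c" if "E ow c" "c \<noteq> e" for c
      using side_uniq[OF e(1) that(1) xe] that(2) by blast
    have hasM2: "\<exists>v\<in>side ow c. v \<in> M2 V E" if c: "E ow c" "c \<noteq> e" for c
    proof (cases "\<exists>z\<in>side ow c. major V E z")
      case True then show ?thesis using MS[OF c(1)] by blast
    next
      case False
      then obtain l' where l': "l' \<in> side ow c" "l' \<in> terminals V E ow" using leg_leaf[OF c(1)] by blast
      then have "l' = lx" using onlyl by blast
      then have "c = e" using side_uniq[OF e(1) c(1) e(2)] l' by blast
      then show ?thesis using c by blast
    qed
    obtain f where f: "y \<noteq> ow \<Longrightarrow> E ow f \<and> y \<in> side ow f"
      using side_ex[OF owV y] by metis
    let ?N = "{w \<in> V. E ow w}"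
    have "3 \<le> card ?N" using major_card ow by blast
    moreover have "card (?N - {e, f}) \<ge> card ?N - card {e, f}" by (rule diff_card_le_card_Diff) simp
    moreover have "card {e, f} \<le> 2" by (simp add: card_insert_le_m1)
    ultimately have "card (?N - {e, f}) \<noteq> 0" by linarith
    then have "?N - {e, f} \<noteq> {}" by (metis card.empty)
    then obtain c where c: "c \<in> ?N" "c \<noteq> e" "c \<noteq> f" by blast
    have ec: "E ow c" using c by blast
    have yc: "y \<notin> side ow c"
    proof
      assume yc: "y \<in> side ow c"
      then have "y \<noteq> ow" using u_notin_side by metis
      then have "E ow f" "y \<in> side ow f" using f by auto
      then show False using side_uniq[OF ec _ yc] c(3) by blast
    qed
    obtain v where v: "v \<in> side ow c" "v \<in> M2 V E" using hasM2[OF ec c(2)] by blast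
    have vV: "v \<in> V" using v side_V by blast
    have "d v x = d v ow + d ow x" using side_add[OF ec v(1) x xout[OF ec c(2)]] .
    moreover have "d v y = d v ow + d ow y" using side_add[OF ec v(1) y yc] .
    moreover have "d x v = d y v" using B v by blast
    moreover have "d x v = d v x" "d y v = d v y" using dist_sym x y vV by auto
    ultimately have eqd: "d ow x = d ow y" by simp
    have yo: "y \<noteq> ow"
    proof
      assume "y = ow"
      then have "d ow x = 0" using eqd dist_self by simp
      then show False using dist_0 owV x xo by blast
    qed
    then have fy: "E ow f" "y \<in> side ow f" using f by auto
    show False
    proof (cases "f = e")
      case True
      obtain P where g: "geo P ow lx" using geo_ex owV lxV by blast
      have lg: "side ow e \<subseteq> set P" using leg[OF owV ow(2) e g] .
      have "x \<in> set P" "y \<in> set P" using lg xe fy True by auto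
      then have "x = P ! (d ow x)" "y = P ! (d ow y)" using geo_in_set[OF g owV] by auto
      then show False using eqd xy by simp
    next
      case False
      obtain v' where v': "v' \<in> side ow f" "v' \<in> M2 V E" using hasM2[OF fy(1) False] by blast
      have v'V: "v' \<in> V" using v' side_V by blast
      have "d v' x = d v' ow + d ow x" using side_add[OF fy(1) v'(1) x xout[OF fy(1) False]] .
      moreover have "d y v' + 2 \<le> d y ow + d ow v'" using side_same[OF fy(1) fy(2) v'(1)] .
      moreover have "d x v' = d y v'" using B v' by blast
      moreover have "d x v' = d v' x" "d y ow = d ow y" "d ow v' = d v' ow"
        using dist_sym x y v'V owV by auto
      ultimately show False using eqd by linarith
    qed
  qed
  moreover have "d x lx < d y lx" using cl dist_sym x y lxV by simp
  ultimately show ?thesis using ow by blast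
qed

lemma geo_interior_nbrs: assumes g: "geo P v l" and vV: "v \<in> V" and i0: "0 < i" and il: "i < d v l"
  shows "E (P ! i) (P ! (i - 1)) \<and> E (P ! i) (P ! (i + 1)) \<and> P ! (i - 1) \<noteq> P ! (i + 1)"
proof -
  have wP: "walk E P" "length P = Suc (d v l)" using g unfolding geo_def by auto
  have "E (P ! (i - 1)) (P ! Suc (i - 1))" using walk_nth[OF wP(1), of "i - 1"] i0 il wP(2) by simp
  then have "E (P ! (i - 1)) (P ! i)" using i0 by simp
  then have e1: "E (P ! i) (P ! (i - 1))" using Esym by blast
  have e2: "E (P ! i) (P ! (i + 1))" using walk_nth[OF wP(1), of i] il wP(2) by simp
  have d1: "d v (P ! (i - 1)) = i - 1" using geo_nth[OF g vV, of "i - 1"] il wP(2) by simp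
  have d2: "d v (P ! (i + 1)) = i + 1" using geo_nth[OF g vV, of "i + 1"] il wP(2) by simp
  have "P ! (i - 1) \<noteq> P ! (i + 1)"
  proof
    assume "P ! (i - 1) = P ! (i + 1)"
    then have "i - 1 = i + 1" using d1 d2 by simp
    then show False by simp
  qed
  then show ?thesis using e1 e2 by blast
qed

lemma LB: assumes v: "v \<in> M2 V E" and g: "resolving_function V E g"
  shows "real (ter V E v) / 2 \<le> sum g (Tv V E v - {v})"
proof -
  have mj: "major V E v" using M2_major v .
  have vV: "v \<in> V" using major_V mj .
  let ?T = "terminals V E v"
  have gnn: "\<forall>z\<in>V. 0 \<le> g z" using g unfolding resolving_function_def by blast
  have gres: "\<forall>x\<in>V. \<forall>y\<in>V. x \<noteq> y \<longrightarrow> 1 \<le> sum g (Rset V E x y)"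
    using g unfolding resolving_function_def by blast
  have ex_e: "\<exists>e. E v e \<and> l \<in> side v e" if l: "l \<in> ?T" for l
  proof -
    have lV: "l \<in> V" using l term_sub by blast
    have lv: "l \<noteq> v" using l mj leaf_not_major unfolding terminals_def by blast
    show ?thesis using side_ex[OF vV lV lv] .
  qed
  define ef where "ef l = (SOME e. E v e \<and> l \<in> side v e)" for l
  have ef: "E v (ef l) \<and> l \<in> side v (ef l)" if l: "l \<in> ?T" for l
    unfolding ef_def using someI_ex[OF ex_e[OF l]] .
  have sub: "side v (ef l) \<subseteq> Tv V E v - {v}" if l: "l \<in> ?T" for l
  proof -
    have lV: "l \<in> V" using l term_sub by blast
    obtain P where P: "geo P v l" using geo_ex vV lV by blast
    have "side v (ef l) \<subseteq> set P" using leg[OF vV l _ _ P] ef[OF l] by blast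
    moreover have "set P \<subseteq> Tv V E v" using geo_Tv[OF P vV l] .
    moreover have "v \<notin> side v (ef l)" using u_notin_side by metis
    ultimately show ?thesis by blast
  qed
  have inj: "ef l \<noteq> ef l'" if l: "l \<in> ?T" and l': "l' \<in> ?T" and ll: "l \<noteq> l'" for l l'
  proof
    assume eq: "ef l = ef l'"
    have lV: "l \<in> V" and l'V: "l' \<in> V" using l l' term_sub by auto
    obtain P where P: "geo P v l" using geo_ex vV lV by blast
    have wP: "hd P = v" "last P = l" "length P = Suc (d v l)" using P unfolding geo_def by auto
    have "l' \<in> side v (ef l)" using ef[OF l'] eq by simp
    then have l'P: "l' \<in> set P" using leg[OF vV l _ _ P] ef[OF l] by blast
    define i where "i = d v l'"
    have i: "i < length P" "l' = P ! i" using geo_in_set[OF P vV l'P] unfolding i_def by auto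
    have l'v: "l' \<noteq> v" using l' mj leaf_not_major unfolding terminals_def by blast
    have i0: "0 < i" using dist_0 vV l'V l'v unfolding i_def by (metis gr0I)
    show False
    proof (cases "i < d v l")
      case True
      have nb: "E l' (P ! (i - 1)) \<and> E l' (P ! (i + 1)) \<and> P ! (i - 1) \<noteq> P ! (i + 1)"
        using geo_interior_nbrs[OF P vV i0 True] i(2) by simp
      then have "{P ! (i - 1), P ! (i + 1)} \<subseteq> {w \<in> V. E l' w}" using Ein by blast
      then have "card {P ! (i - 1), P ! (i + 1)} \<le> card {w \<in> V. E l' w}"
        using nbr_fin by (rule card_mono[rotated])
      moreover have "card {w \<in> V. E l' w} = 1" using l' unfolding terminals_def leaf_def degree_def by blast
      ultimately show False using nb by simp
    next
      case False
      then have "i = d v l" using i wP by simp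
      moreover have "P \<noteq> []" using wP by auto
      ultimately have "l' = l" using i wP last_conv_nth[of P] by simp
      then show False using ll by simp
    qed
  qed
  have disj: "side v (ef l) \<inter> side v (ef l') = {}" if l: "l \<in> ?T" and l': "l' \<in> ?T" and ll: "l \<noteq> l'" for l l'
    using side_uniq[of v "ef l" "ef l'"] ef[OF l] ef[OF l'] inj[OF l l' ll] by blast
  define s where "s l = sum g (side v (ef l))" for l
  have snn: "\<forall>l\<in>?T. 0 \<le> s l" unfolding s_def using gnn side_V by (meson subsetD sum_nonneg)
  have pair: "1 \<le> s l + s l'" if l: "l \<in> ?T" and l': "l' \<in> ?T" and ll: "l \<noteq> l'" for l l'
  proof -
    have e1: "E v (ef l)" and e2: "E v (ef l')" using ef l l' by auto
    have V1: "ef l \<in> V" and V2: "ef l' \<in> V" using Ein e1 e2 by auto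
    have "Rset V E (ef l) (ef l') \<subseteq> side v (ef l) \<union> side v (ef l')"
    proof
      fix z assume z: "z \<in> Rset V E (ef l) (ef l')"
      then have zV: "z \<in> V" and dz: "d (ef l) z \<noteq> d (ef l') z" unfolding Rset_def by auto
      show "z \<in> side v (ef l) \<union> side v (ef l')"
      proof (rule ccontr)
        assume "z \<notin> side v (ef l) \<union> side v (ef l')"
        then have "d (ef l) z = d v z + 1" "d (ef l') z = d v z + 1"
          using side_out[OF e1 zV] side_out[OF e2 zV] by auto
        then show False using dz by simp
      qed
    qed
    moreover have "finite (side v (ef l) \<union> side v (ef l'))" using side_finite by blast
    moreover have "\<forall>z\<in>side v (ef l) \<union> side v (ef l'). 0 \<le> g z" using gnn side_V by blast
    ultimately have "sum g (Rset V E (ef l) (ef l')) \<le> sum g (side v (ef l) \<union> side v (ef l'))"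
      by (intro sum_mono2) auto
    also have "\<dots> = s l + s l'" unfolding s_def using disj[OF l l' ll] side_finite
      by (intro sum.union_disjoint) auto
    finally show ?thesis using gres V1 V2 inj[OF l l' ll] by fastforce
  qed
  have "real (card ?T) / 2 \<le> sum s ?T"
  proof (rule avg[OF term_fin])
    show "2 \<le> card ?T" using v unfolding M2_def ter_def by blast
    show "\<forall>l\<in>?T. 0 \<le> s l" using snn .
    show "\<forall>l\<in>?T. \<forall>l'\<in>?T. l \<noteq> l' \<longrightarrow> 1 \<le> s l + s l'" using pair by blast
  qed
  also have "sum s ?T = sum g (\<Union>l\<in>?T. side v (ef l))" unfolding s_def
    using term_fin side_finite disj by (intro sum.UNION_disjoint[symmetric]) auto
  also have "\<dots> \<le> sum g (Tv V E v - {v})"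
  proof (rule sum_mono2)
    show "finite (Tv V E v - {v})" using Tv_fin vV by blast
    show "(\<Union>l\<in>?T. side v (ef l)) \<subseteq> Tv V E v - {v}" using sub by blast
    show "\<And>b. b \<in> Tv V E v - {v} - (\<Union>l\<in>?T. side v (ef l)) \<Longrightarrow> 0 \<le> g b"
      using gnn Tv_sub vV by blast
  qed
  finally show ?thesis unfolding ter_def .
qed

lemma hsum: "finite A \<Longrightarrow> sum (\<lambda>z. if z \<in> L then (1/2::real) else 0) A = real (card (A \<inter> L)) / 2"
proof -
  assume fA: "finite A"
  have "sum (\<lambda>z. if z \<in> L then (1/2::real) else 0) A = sum (\<lambda>_. 1/2) {z \<in> A. z \<in> L}"
    using sum.inter_filter[OF fA, of "\<lambda>_. (1/2::real)" "\<lambda>z. z \<in> L"] by simp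
  also have "{z \<in> A. z \<in> L} = A \<inter> L" by blast
  finally show ?thesis by simp
qed

lemma UB: assumes ex: "\<exists>w. major V E w"
  shows "resolving_function V E (\<lambda>z. if z \<in> (\<Union>v\<in>M2 V E. terminals V E v) then (1/2::real) else 0)"
proof -
  let ?L = "\<Union>v\<in>M2 V E. terminals V E v"
  have two: "2 \<le> card (Rset V E x y \<inter> ?L)" if x: "x \<in> V" and y: "y \<in> V" and xy: "x \<noteq> y" for x y
  proof -
    have fin: "finite (Rset V E x y \<inter> ?L)" using finV unfolding Rset_def by simp
    show ?thesis
    proof (cases "\<exists>v\<in>M2 V E. d x v \<noteq> d y v")
      case True
      then obtain v where v: "v \<in> M2 V E" "d x v \<noteq> d y v" by blast
      have "terminals V E v \<subseteq> Rset V E x y \<inter> ?L"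
        using caseA[OF v(1) x y v(2)] term_sub v(1) unfolding Rset_def by blast
      then have "card (terminals V E v) \<le> card (Rset V E x y \<inter> ?L)" using fin by (rule card_mono[rotated])
      moreover have "2 \<le> card (terminals V E v)" using v unfolding M2_def ter_def by blast
      ultimately show ?thesis by simp
    next
      case False
      then have B: "\<forall>v\<in>M2 V E. d x v = d y v" by blast
      then have B': "\<forall>v\<in>M2 V E. d y v = d x v" by simp
      obtain l1 where l1: "l1 \<in> ?L" "d x l1 < d y l1" using caseB[OF x y xy B ex] by blast
      have yx: "y \<noteq> x" using xy by simp
      obtain l2 where l2: "l2 \<in> ?L" "d y l2 < d x l2" using caseB[OF y x yx B' ex] by blast
      have "l1 \<in> V" "l2 \<in> V" using l1 l2 term_sub by auto
      then have "{l1, l2} \<subseteq> Rset V E x y \<inter> ?L" using l1 l2 unfolding Rset_def by auto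
      then have "card {l1, l2} \<le> card (Rset V E x y \<inter> ?L)" using fin by (rule card_mono[rotated])
      moreover have "l1 \<noteq> l2" using l1 l2 by auto
      ultimately show ?thesis by simp
    qed
  qed
  show ?thesis unfolding resolving_function_def
  proof (intro conjI ballI impI)
    fix x y assume x: "x \<in> V" and y: "y \<in> V" and xy: "x \<noteq> y"
    have fin: "finite (Rset V E x y)" using finV unfolding Rset_def by simp
    show "1 \<le> sum (\<lambda>z. if z \<in> ?L then (1/2::real) else 0) (Rset V E x y)"
      using hsum[OF fin, of ?L] two[OF x y xy] by simp
  qed auto
qed

end

theorem lemma3p13:
  fixes V :: "'a set" and E :: "'a \<Rightarrow> 'a \<Rightarrow> bool" and g :: "'a \<Rightarrow> real"
  assumes "tree V E"
    and "ex V E \<ge> 1"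
    and "min_resolving_function V E g"
  shows "(\<forall>v\<in>M2 V E. sum g (Tv V E v - {v}) = real (ter V E v) / 2)
       \<and> (\<Sum>v\<in>M2 V E. sum g (Tv V E v) - g v) = fdim V E"
proof -
  interpret tr V E using assms(1) by unfold_locales
  have "ext_major V E \<noteq> {}" using assms(2) unfolding ex_def by (metis card.empty not_one_le_zero)
  then have exm: "\<exists>w. major V E w" unfolding ext_major_def by blast
  let ?L = "\<Union>v\<in>M2 V E. terminals V E v"
  define h where "h = (\<lambda>z. if z \<in> ?L then (1/2::real) else 0)"
  have hres: "resolving_function V E h" unfolding h_def using UB[OF exm] .
  have M2sub: "M2 V E \<subseteq> V" using M2_major major_V by blast
  have M2fin: "finite (M2 V E)" using M2sub finV finite_subset by blast
  have Ldisj: "\<forall>v\<in>M2 V E. \<forall>w\<in>M2 V E. v \<noteq> w \<longrightarrow> terminals V E v \<inter> terminals V E w = {}"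
  proof (intro ballI impI)
    fix v w assume v: "v \<in> M2 V E" and w: "w \<in> M2 V E" and vw: "v \<noteq> w"
    show "terminals V E v \<inter> terminals V E w = {}"
    proof (rule ccontr)
      assume "terminals V E v \<inter> terminals V E w \<noteq> {}"
      then obtain l where l: "l \<in> terminals V E v" "l \<in> terminals V E w" by blast
      have "d l v < d l w" using l(1) M2_major[OF w] vw unfolding terminals_def by blast
      moreover have "d l w < d l v" using l(2) M2_major[OF v] vw unfolding terminals_def by blast
      ultimately show False by simp
    qed
  qed
  have LV: "?L \<subseteq> V" using term_sub by blast
  have "card ?L = (\<Sum>v\<in>M2 V E. card (terminals V E v))"
    using M2fin term_fin Ldisj by (intro card_UN_disjoint) auto
  then have "real (card ?L) = (\<Sum>v\<in>M2 V E. real (ter V E v))" unfolding ter_def by simp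
  moreover have "sum h V = real (card (V \<inter> ?L)) / 2" unfolding h_def using hsum[OF finV] .
  moreover have "V \<inter> ?L = ?L" using LV by blast
  ultimately have hV: "sum h V = (\<Sum>v\<in>M2 V E. real (ter V E v) / 2)"
    by (simp add: sum_divide_distrib)
  have gres: "resolving_function V E g" and gsum: "sum g V = fdim V E"
    using assms(3) unfolding min_resolving_function_def by auto
  have gnn: "\<forall>z\<in>V. 0 \<le> g z" using gres unfolding resolving_function_def by blast
  have fle: "fdim V E \<le> sum h V" unfolding fdim_def
  proof (rule cInf_lower)
    show "sum h V \<in> {sum g V |g. resolving_function V E g}" using hres by blast
    show "bdd_below {sum g V |g. resolving_function V E g}"
    proof (rule bdd_belowI[of _ 0])
      fix x assume "x \<in> {sum g V |g. resolving_function V E g}"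
      then obtain f where "x = sum f V" "resolving_function V E f" by blast
      then show "0 \<le> x" unfolding resolving_function_def by (simp add: sum_nonneg)
    qed
  qed
  define A where "A v = sum g (Tv V E v - {v})" for v
  define B where "B v = real (ter V E v) / 2" for v
  have lb: "\<forall>v\<in>M2 V E. B v \<le> A v" unfolding A_def B_def using LB gres by blast
  have "sum A (M2 V E) = sum g (\<Union>v\<in>M2 V E. Tv V E v - {v})" unfolding A_def
  proof (rule sum.UNION_disjoint[symmetric])
    show "finite (M2 V E)" using M2fin .
    show "\<forall>v\<in>M2 V E. finite (Tv V E v - {v})" using Tv_fin M2sub by blast
    show "\<forall>v\<in>M2 V E. \<forall>w\<in>M2 V E. v \<noteq> w \<longrightarrow> (Tv V E v - {v}) \<inter> (Tv V E w - {w}) = {}"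
      using Tv_disj M2_major by blast
  qed
  also have "\<dots> \<le> sum g V"
  proof (rule sum_mono2[OF finV])
    show "(\<Union>v\<in>M2 V E. Tv V E v - {v}) \<subseteq> V" using Tv_sub M2sub by blast
    show "\<And>b. b \<in> V - (\<Union>v\<in>M2 V E. Tv V E v - {v}) \<Longrightarrow> 0 \<le> g b" using gnn by blast
  qed
  finally have ub: "sum A (M2 V E) \<le> sum g V" .
  have sB: "sum B (M2 V E) = sum h V" unfolding B_def using hV by simp
  have sAB: "sum B (M2 V E) \<le> sum A (M2 V E)" using lb by (intro sum_mono) auto
  have eqA: "sum A (M2 V E) = fdim V E" using ub gsum fle sB sAB by linarith
  have "sum (\<lambda>v. A v - B v) (M2 V E) = 0"
    using eqA gsum fle sB sAB ub by (simp add: sum_subtractf)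
  then have "\<forall>v\<in>M2 V E. A v - B v = 0"
    using sum_nonneg_eq_0_iff[OF M2fin, of "\<lambda>v. A v - B v"] lb by auto
  then have part1: "\<forall>v\<in>M2 V E. sum g (Tv V E v - {v}) = real (ter V E v) / 2"
    unfolding A_def B_def by simp
  have "(\<Sum>v\<in>M2 V E. sum g (Tv V E v) - g v) = sum A (M2 V E)"
  proof (rule sum.cong)
    fix v assume v: "v \<in> M2 V E"
    have vV: "v \<in> V" using v M2sub by blast
    have "v \<in> Tv V E v" unfolding Tv_def by blast
    then have "sum g (Tv V E v) = g v + sum g (Tv V E v - {v})"
      using Tv_fin[OF vV] by (simp add: sum.remove)
    then show "sum g (Tv V E v) - g v = A v" unfolding A_def by simp
  qed simp
  then show ?thesis using part1 eqA by simp
qed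

end
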